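(* Let $\Theta\subset\mathbb{R}^p$ be a parameter set containing the true parameter $\theta^\star$. Let $\Phi_1,\dots,\Phi_{N_j}\in\mathbb{R}^{c\times p}$ be the regressor matrices evaluated at sampling times $t_1,\dots,t_{N_j}$ along a planned trajectory, and let $A\in\mathbb{R}^{M\times p}$, $M=N_jc$, be their vertical stack. Assume the executed trajectory equals the planned one, so that the stacked regressor of the executed samples is $A_{\mathrm{act}}=A$, and that the measurements satisfy $z_j=\Phi_j\theta^\star+w_j$ with $\|w_j\|_\infty\le\overline w$ for all $j$; write $z=A\theta^\star+w$ for the stacked data. Define $$\Theta_{\mathrm{act}}=\{\theta\in\Theta:\ \|z-A_{\mathrm{act}}\theta\|_\infty\le\overline w\},\quad \mathcal{E}_\theta=\{e\in\mathbb{R}^p:\|Ae\|_\infty\le 2\overline w\},\quad \Theta_{N_j}(\theta^\star)=\Theta\cap(\theta^\star+\mathcal{E}_\theta).$$ Then for every unit direction $d\in\mathbb{R}^p$, $$w_d(\Theta_{\mathrm{act}})\le w_d\big(\Theta_{N_j}(\theta^\star)\big)\le \min\big(w_d(\Theta),\,2h_{\mathcal{E}_\theta}(d)\big),$$ where $h_{\mathcal{E}_\theta}(d)=\sup_{e\in\mathcal{E}_\theta}d^\top e$ admits the exact dual form $$h_{\mathcal{E}_\theta}(d)=2\overline w\,\min_{\lambda\in\mathbb{R}^M:\ A^\top\lambda=d}\|\lambda\|_1 .$$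
   Context: For a set $\mathcal{C}\subset\mathbb{R}^p$ and a direction $d$, the width of $\mathcal{C}$ along $d$ is $w_d(\mathcal{C})=\sup_{x\in\mathcal{C}}d^\top x-\inf_{x\in\mathcal{C}}d^\top x$. The regressors come from a linear-in-parameter identification model $z(t)=\Phi(x,u)\theta+w(t)$ with $\|w(t)\|_\infty\le\overline w$. In the paper, $d$ ranges over a finite set $\mathcal{D}$ of unit directions. *)

theory Defs
  imports "HOL-Analysis.Analysis" "HOL-Library.Extended_Real"
begin

definition width :: "real^'p \<Rightarrow> (real^'p) set \<Rightarrow> ereal" where
  "width d C = (SUP x\<in>C. ereal (d \<bullet> x)) - (INF x\<in>C. ereal (d \<bullet> x))"

definition support_fun :: "(real^'p) set \<Rightarrow> real^'p \<Rightarrow> ereal" where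
  "support_fun E d = (SUP e\<in>E. ereal (d \<bullet> e))"

definition l1norm :: "real^'m \<Rightarrow> real" where
  "l1norm v = (\<Sum>i\<in>UNIV. \<bar>v $ i\<bar>)"

text \<open>Vertical stack of the c x p regressor matrices Phi_j (j ranging over the
  finite sample index type 'n): row (j,i) of the stack is row i of Phi_j.
  M = CARD('n) * CARD('c).\<close>
definition stack_mat :: "('n::finite \<Rightarrow> real^'p^'c::finite) \<Rightarrow> real^'p^('n \<times> 'c)" where
  "stack_mat Phi = (\<chi> ji. Phi (fst ji) $ (snd ji))"

definition stack_vec :: "('n::finite \<Rightarrow> real^'c::finite) \<Rightarrow> real^('n \<times> 'c)" where
  "stack_vec z = (\<chi> ji. z (fst ji) $ (snd ji))"

end

theory Submission
  imports Defs
begin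


lemma infnorm_le_cart:
  fixes x :: "real^'n"
  assumes "\<And>i. \<bar>x$i\<bar> \<le> B"
  shows "infnorm x \<le> B"
  unfolding infnorm_cart by (rule cSup_least) (use assms in auto)

lemma stack_mv:
  "(stack_mat Phi *v th) $ ji = (Phi (fst ji) *v th) $ (snd ji)"
  by (simp add: stack_mat_def matrix_vector_mult_def)

lemma weak_dual:
  fixes A :: "real^'p^'m"
  assumes "transpose A *v lam = d"
  shows "d \<bullet> e \<le> l1norm lam * infnorm (A *v e)"
proof -
  have "d \<bullet> e = lam \<bullet> (A *v e)" using assms dot_lmul_matrix by auto
  also have "\<dots> = (\<Sum>i\<in>UNIV. lam$i * (A *v e)$i)" by (simp add: inner_vec_def)
  also have "\<dots> \<le> (\<Sum>i\<in>UNIV. \<bar>lam$i\<bar> * infnorm (A *v e))"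
  proof (rule sum_mono)
    fix i
    have "lam$i * (A *v e)$i \<le> \<bar>lam$i\<bar> * \<bar>(A *v e)$i\<bar>" by (metis abs_ge_self abs_mult)
    also have "\<dots> \<le> \<bar>lam$i\<bar> * infnorm (A *v e)"
      by (simp add: component_le_infnorm_cart mult_left_mono)
    finally show "lam$i * (A *v e)$i \<le> \<bar>lam$i\<bar> * infnorm (A *v e)" .
  qed
  also have "\<dots> = l1norm lam * infnorm (A *v e)" by (simp add: l1norm_def sum_distrib_right)
  finally show ?thesis .
qed

lemma l1_cont: "continuous_on S (l1norm :: real^'m \<Rightarrow> real)"
  unfolding l1norm_def by (intro continuous_intros)

lemma l1_ball_compact: "compact {lam :: real^'m. l1norm lam \<le> t}"
unfolding compact_eq_bounded_closed proof
  show "bounded {lam :: real^'m. l1norm lam \<le> t}"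
    unfolding bounded_iff using norm_le_l1_cart l1norm_def by (metis (lifting) mem_Collect_eq order_trans)
  show "closed {lam :: real^'m. l1norm lam \<le> t}"
    by (rule closed_Collect_le) (auto intro: continuous_intros l1_cont)
qed

lemma l1_axis: "l1norm (axis i (c::real)) = \<bar>c\<bar>"
  proof -
  have "l1norm (axis i c) = (\<Sum>ia\<in>UNIV. if ia = i then \<bar>c\<bar> else 0)"
    unfolding l1norm_def axis_def by (rule sum.cong) auto
  thus ?thesis by simp
qed

lemma l1_convex: "convex {lam :: real^'m. l1norm lam \<le> t}"
  unfolding convex_def
proof safe
  fix x y :: "real^'m" and u v :: real
  assume h: "l1norm x \<le> t" "l1norm y \<le> t" "0 \<le> u" "0 \<le> v" "u + v = 1"
  have "l1norm (u *\<^sub>R x + v *\<^sub>R y) \<le> (\<Sum>i\<in>UNIV. u * \<bar>x$i\<bar> + v * \<bar>y$i\<bar>)"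
    unfolding l1norm_def
  proof (rule sum_mono)
    fix i
    have "\<bar>u * x$i + v * y$i\<bar> \<le> \<bar>u * x$i\<bar> + \<bar>v * y$i\<bar>" by (rule abs_triangle_ineq)
    thus "\<bar>(u *\<^sub>R x + v *\<^sub>R y)$i\<bar> \<le> u * \<bar>x$i\<bar> + v * \<bar>y$i\<bar>" using h by (simp add: abs_mult)
  qed
  also have "\<dots> = u * l1norm x + v * l1norm y" by (simp add: l1norm_def sum.distrib sum_distrib_left)
  also have "\<dots> \<le> u * t + v * t" using h by (intro add_mono mult_left_mono) auto
  also have "\<dots> = t" using h by (simp add: distrib_right[symmetric])
  finally show "l1norm (u *\<^sub>R x + v *\<^sub>R y) \<le> t" .
qed

lemma mv_neg: "(A :: real^'p^'m) *v (- x) = - (A *v x)"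
  using matrix_vector_mult_diff_distrib[of A 0 x] by simp

lemma key_sep:
  fixes A :: "real^'p^'m" and d :: "real^'p"
  assumes t: "t > 0" and wb: "wbar > 0"
    and nf: "\<And>lam. l1norm lam \<le> t \<Longrightarrow> transpose A *v lam \<noteq> d"
  shows "\<exists>e. infnorm (A *v e) \<le> 2 * wbar \<and> d \<bullet> e > 2 * wbar * t"
proof -
  let ?S = "(\<lambda>lam. transpose A *v lam) ` {lam. l1norm lam \<le> t}"
  have "compact ?S"
    by (rule compact_continuous_image[OF linear_continuous_on[OF linear_conv_bounded_linear[THEN iffD1, OF matrix_vector_mul_linear]] l1_ball_compact])
  have "convex ?S"
  proof (rule convex_linear_image)
    show "linear (\<lambda>lam. transpose A *v lam)" by (rule matrix_vector_mul_linear)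
    show "convex {lam :: real^'m. l1norm lam \<le> t}"
      by (rule l1_convex)
  qed
  have "d \<notin> ?S" using nf by auto
  then obtain a b where ab: "a \<bullet> d < b" "\<forall>x\<in>?S. a \<bullet> x > b"
    using separating_hyperplane_closed_point[OF \<open>convex ?S\<close> compact_imp_closed[OF \<open>compact ?S\<close>]] by blast
  define c where "c = -b"
  define e where "e = - a"
  have "0 \<in> ?S" using t by (auto simp: l1norm_def image_iff intro!: exI[of _ 0])
  hence "b < 0" using ab by fastforce
  hence c0: "c > 0" by (simp add: c_def)
  have de: "d \<bullet> e > c" using ab by (simp add: c_def e_def inner_commute)
  have comp: "t * \<bar>(A *v e)$i\<bar> \<le> c" for i
  proof -
    have "t * s * (A *v e)$i < c" if s: "\<bar>s\<bar> = 1" for s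
    proof -
      have "(transpose A *v axis i (t * s)) \<in> ?S" using t s by (intro imageI) (simp add: l1_axis abs_mult)
      hence "a \<bullet> (transpose A *v axis i (t * s)) > b" using ab by blast
      hence "axis i (t * s) \<bullet> (A *v a) > b"
        by (metis dot_lmul_matrix inner_commute transpose_matrix_vector)
      thus ?thesis by (simp add: c_def e_def inner_axis' mv_neg mult.commute mult.left_commute)
    qed
    from this[of 1] this[of "-1"] show ?thesis using t by (cases "(A *v e)$i \<ge> 0") auto
  qed
  define e' where "e' = (2 * wbar * t / c) *\<^sub>R e"
  have "infnorm (A *v e') = (2 * wbar * t / c) * infnorm (A *v e)"
    using wb t c0 by (simp add: e'_def matrix_vector_mult_scaleR infnorm_mul)
  also have "\<dots> \<le> (2 * wbar * t / c) * (c / t)"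
    using wb t c0 comp by (intro mult_left_mono infnorm_le_cart) (auto simp: field_simps)
  also have "\<dots> = 2 * wbar" using t c0 by simp
  finally have "infnorm (A *v e') \<le> 2 * wbar" .
  moreover have "d \<bullet> e' > 2 * wbar * t"
  proof -
    have "d \<bullet> e' = (2 * wbar * t / c) * (d \<bullet> e)" by (simp add: e'_def)
    also have "\<dots> > (2 * wbar * t / c) * c" using de wb t c0 by (intro mult_strict_left_mono) auto
    finally show ?thesis using c0 by simp
  qed
  ultimately show ?thesis by blast
qed


lemma width_mono: "C \<subseteq> D \<Longrightarrow> width d C \<le> width d D"
  unfolding width_def by (intro ereal_minus_mono SUP_subset_mono INF_superset_mono) auto

lemma feas_min:
  fixes A :: "real^'p^'m"
  assumes "{lam. transpose A *v lam = d} \<noteq> {}"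
  shows "\<exists>lam0\<in>{lam. transpose A *v lam = d}. \<forall>lam\<in>{lam. transpose A *v lam = d}. l1norm lam0 \<le> l1norm lam"
proof -
  let ?F = "{lam. transpose A *v lam = d}"
  obtain l1 where l1: "l1 \<in> ?F" using assms by blast
  let ?K = "?F \<inter> {lam. l1norm lam \<le> l1norm l1}"
  have "closed ?F"
    by (rule closed_Collect_eq[OF linear_continuous_on[OF linear_conv_bounded_linear[THEN iffD1, OF matrix_vector_mul_linear]]]) (auto intro: continuous_intros)
  hence cK: "compact ?K" by (rule closed_Int_compact) (rule l1_ball_compact)
  have nK: "?K \<noteq> {}" using l1 by auto
  obtain l0 where l0: "l0 \<in> ?K" "\<forall>y\<in>?K. l1norm l0 \<le> l1norm y"
    using continuous_attains_inf[OF cK nK l1_cont] by (elim bexE) blast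
  show ?thesis
  proof (rule bexI[of _ l0])
    show "l0 \<in> ?F" using l0 by auto
    show "\<forall>lam\<in>?F. l1norm l0 \<le> l1norm lam"
    proof
      fix lam assume "lam \<in> ?F"
      thus "l1norm l0 \<le> l1norm lam" using l0 by (cases "l1norm lam \<le> l1norm l1") auto
    qed
  qed
qed

theorem proposition1:
  fixes Theta :: "(real^'p) set"
    and theta_star :: "real^'p"
    and Phi :: "'n::finite \<Rightarrow> real^'p^'c::finite"
    and zs ws :: "'n \<Rightarrow> real^'c"
    and wbar :: real
    and A A_act :: "real^'p^('n \<times> 'c)"
    and z w :: "real^('n \<times> 'c)"
    and d :: "real^'p"
  assumes theta_in: "theta_star \<in> Theta"
    and A_def: "A = stack_mat Phi"
    and exec: "A_act = A"
    and meas: "\<And>j. zs j = Phi j *v theta_star + ws j"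
    and noise: "\<And>j. infnorm (ws j) \<le> wbar"
    and wbar_pos: "wbar > 0"
    and z_def: "z = stack_vec zs"
    and w_def: "w = stack_vec ws"
    and unit: "norm d = 1"
  shows
    "let Theta_act = {theta \<in> Theta. infnorm (z - A_act *v theta) \<le> wbar};
         E = {e. infnorm (A *v e) \<le> 2 * wbar};
         Theta_N = Theta \<inter> ((\<lambda>e. theta_star + e) ` E);
         Feas = {lam. transpose A *v lam = d}
     in width d Theta_act \<le> width d Theta_N
      \<and> width d Theta_N \<le> min (width d Theta) (2 * support_fun E d)
      \<and> support_fun E d = ereal (2 * wbar) * (INF lam\<in>Feas. ereal (l1norm lam))
      \<and> (Feas \<noteq> {} \<longrightarrow> (\<exists>lam0\<in>Feas. \<forall>lam\<in>Feas. l1norm lam0 \<le> l1norm lam))"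
proof -
  define Ta where "Ta = {theta \<in> Theta. infnorm (z - A_act *v theta) \<le> wbar}"
  define E where "E = {e. infnorm (A *v e) \<le> 2 * wbar}"
  define TN where "TN = Theta \<inter> ((\<lambda>e. theta_star + e) ` E)"
  define Feas where "Feas = {lam. transpose A *v lam = d}"
  define h where "h = support_fun E d"
  have zw: "z - A *v theta_star = w"
    unfolding vec_eq_iff
  proof
    fix ji :: "'n \<times> 'c"
    show "(z - A *v theta_star) $ ji = w $ ji"
      using meas[of "fst ji"] by (simp add: z_def w_def A_def stack_mv stack_vec_def)
  qed
  have wn: "infnorm w \<le> wbar"
  proof (rule infnorm_le_cart)
    fix ji :: "'n \<times> 'c"
    have "\<bar>w $ ji\<bar> = \<bar>ws (fst ji) $ snd ji\<bar>" by (simp add: w_def stack_vec_def)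
    also have "\<dots> \<le> wbar" using component_le_infnorm_cart[of "ws (fst ji)" "snd ji"] noise[of "fst ji"] by linarith
    finally show "\<bar>w $ ji\<bar> \<le> wbar" .
  qed
  have sub1: "Ta \<subseteq> TN"
  proof
    fix th assume th: "th \<in> Ta"
    have "A *v (th - theta_star) = A *v th - A *v theta_star"
      by (rule matrix_vector_mult_diff_distrib)
    also have "\<dots> = w - (z - A *v th)" unfolding zw[symmetric] by simp
    finally have "A *v (th - theta_star) = w - (z - A *v th)" .
    moreover have "infnorm (w - (z - A *v th)) \<le> infnorm w + infnorm (z - A *v th)"
      using infnorm_triangle[of w "-(z - A *v th)"] by (simp only: diff_conv_add_uminus[of w] infnorm_neg)
    ultimately have "infnorm (A *v (th - theta_star)) \<le> infnorm w + infnorm (z - A *v th)"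
      by simp
    also have "\<dots> \<le> 2 * wbar" using wn th exec by (simp add: Ta_def)
    finally have "th - theta_star \<in> E" by (simp add: E_def)
    hence "th \<in> (\<lambda>e. theta_star + e) ` E" by (rule image_eqI[rotated]) simp
    thus "th \<in> TN" using th by (simp add: TN_def Ta_def)
  qed
  have sub2: "TN \<subseteq> Theta" by (auto simp: TN_def)
  have E0: "0 \<in> E" using wbar_pos by (simp add: E_def infnorm_0)
  have Eneg: "- e \<in> E" if "e \<in> E" for e
    using that by (simp add: E_def mv_neg infnorm_neg)
  have hub: "ereal (d \<bullet> e) \<le> h" if "e \<in> E" for e
    unfolding h_def support_fun_def using that by (rule SUP_upper)
  have h0: "0 \<le> h" using hub[OF E0] by (simp add: zero_ereal_def)
  have w2: "width d TN \<le> 2 * h"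
  proof (cases "h = \<infinity>")
    case True thus ?thesis by simp
  next
    case False
    then obtain hr where hr: "h = ereal hr" using h0 by (cases h) auto
    define s where "s = d \<bullet> theta_star"
    have "(SUP x\<in>TN. ereal (d \<bullet> x)) \<le> ereal (s + hr)"
    proof (rule SUP_least)
      fix x assume "x \<in> TN"
      then obtain e where e: "e \<in> E" "x = theta_star + e" by (auto simp: TN_def)
      have "d \<bullet> e \<le> hr" using hub[OF e(1)] hr by simp
      thus "ereal (d \<bullet> x) \<le> ereal (s + hr)" using e by (simp add: s_def inner_add_right)
    qed
    moreover have "ereal (s - hr) \<le> (INF x\<in>TN. ereal (d \<bullet> x))"
    proof (rule INF_greatest)
      fix x assume "x \<in> TN"
      then obtain e where e: "e \<in> E" "x = theta_star + e" by (auto simp: TN_def)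
      have "d \<bullet> (- e) \<le> hr" using hub[OF Eneg[OF e(1)]] hr by simp
      thus "ereal (s - hr) \<le> ereal (d \<bullet> x)" using e by (simp add: s_def inner_add_right)
    qed
    ultimately have "width d TN \<le> ereal (s + hr) - ereal (s - hr)"
      unfolding width_def by (rule ereal_minus_mono)
    also have "\<dots> = 2 * h" using hr by simp
    finally show ?thesis .
  qed
  have part2: "width d TN \<le> min (width d Theta) (2 * h)"
    using w2 width_mono[OF sub2] by simp
  have part3: "h = ereal (2 * wbar) * (INF lam\<in>Feas. ereal (l1norm lam))
      \<and> (Feas \<noteq> {} \<longrightarrow> (\<exists>lam0\<in>Feas. \<forall>lam\<in>Feas. l1norm lam0 \<le> l1norm lam))"
  proof (cases "Feas = {}")
    case True
    have "h = \<infinity>"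
    proof (rule ccontr)
      assume "h \<noteq> \<infinity>"
      then obtain hr where hr: "h = ereal hr" using h0 by (cases h) auto
      define t where "t = hr / (2 * wbar) + 1"
      have hr0: "hr \<ge> 0" using h0 hr by simp
      have t0: "t > 0" using hr0 wbar_pos by (simp add: t_def add_nonneg_pos)
      obtain e where e: "infnorm (A *v e) \<le> 2 * wbar" "d \<bullet> e > 2 * wbar * t"
        using key_sep[OF t0 wbar_pos, of A d] True by (auto simp: Feas_def)
      have "2 * wbar * t = hr + 2 * wbar" using wbar_pos by (simp add: t_def field_simps)
      moreover have "d \<bullet> e \<le> hr" using hub[of e] e(1) hr by (simp add: E_def)
      ultimately show False using e(2) wbar_pos by linarith
    qed
    thus ?thesis using True wbar_pos by (simp add: top_ereal_def)
  next
    case False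
    obtain lam0 where l0: "lam0 \<in> Feas" "\<forall>lam\<in>Feas. l1norm lam0 \<le> l1norm lam"
      using feas_min[of A d] False by (auto simp: Feas_def)
    define r where "r = l1norm lam0"
    have inf: "(INF lam\<in>Feas. ereal (l1norm lam)) = ereal r"
      unfolding r_def
      by (rule antisym) (use l0 in \<open>auto intro: INF_lower INF_greatest\<close>)
    have le: "h \<le> ereal (2 * wbar * r)"
      unfolding h_def support_fun_def
    proof (rule SUP_least)
      fix e assume "e \<in> E"
      hence "d \<bullet> e \<le> r * infnorm (A *v e)" "infnorm (A *v e) \<le> 2 * wbar"
        using weak_dual[of A lam0 d e] l0 by (auto simp: Feas_def E_def r_def)
      moreover have "r \<ge> 0" by (simp add: r_def l1norm_def)
      ultimately have "d \<bullet> e \<le> 2 * wbar * r"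
        by (metis mult.commute mult_left_mono order_trans)
      thus "ereal (d \<bullet> e) \<le> ereal (2 * wbar * r)" by simp
    qed
    have ge: "ereal (2 * wbar * r) \<le> h"
    proof (cases "r = 0")
      case True thus ?thesis using h0 by (simp add: zero_ereal_def)
    next
      case False
      hence rpos: "r > 0" by (simp add: r_def l1norm_def less_le sum_nonneg)
      show ?thesis
      proof (rule dense_le_bounded[of 0])
        show "0 < ereal (2 * wbar * r)" using rpos wbar_pos by simp
        fix q assume q: "0 < q" "q < ereal (2 * wbar * r)"
        then obtain qr where qr: "q = ereal qr" by (cases q) auto
        define t where "t = qr / (2 * wbar)"
        have t0: "t > 0" using q qr wbar_pos by (simp add: t_def)
        have tr: "t < r" using q qr wbar_pos by (simp add: t_def field_simps)
        have nf: "transpose A *v lam \<noteq> d" if "l1norm lam \<le> t" for lam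
          using l0(2) that tr by (auto simp: Feas_def r_def)
        obtain e where e: "infnorm (A *v e) \<le> 2 * wbar" "d \<bullet> e > 2 * wbar * t"
          using key_sep[OF t0 wbar_pos nf] by blast
        have "2 * wbar * t = qr" using wbar_pos by (simp add: t_def)
        hence "q \<le> ereal (d \<bullet> e)" using e qr by simp
        also have "\<dots> \<le> h" using hub[of e] e(1) by (simp add: E_def)
        finally show "q \<le> h" .
      qed
    qed
    show ?thesis using le ge inf l0 by (auto simp: times_ereal.simps)
  qed
  have part1: "width d Ta \<le> width d TN" by (rule width_mono[OF sub1])
  show ?thesis
    unfolding Let_def
    using part1 part2 part3
    by (simp add: Ta_def E_def TN_def Feas_def h_def)
qed

end
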